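(* Let $H$ be a graph, let $G$ be a connected graph, and let $((H^{\Phi},\Phi);(T,\mathcal{X}))$ be an $H$-profile of $G$. Then there exists $t \in V(T)$ such that the set $\bigcup_{x \in \mathcal{X}(t)} V_x$ is a longest path transversal of $G$.
   Context: All graphs are finite and simple. A subdivision $H'$ of $H$ is obtained by replacing each edge $xy$ of $H$ by a path from $x$ to $y$ of length at least one, with the interiors of these paths pairwise disjoint and anticomplete. An $H$-representation of $G$ is a pair $(H^{\Phi},\Phi)$ where $H^{\Phi}$ is a subdivision of $H$ and $\Phi: V(G)\to 2^{V(H^{\Phi})}$ is such that each $H^{\Phi}[\Phi(v)]$ is connected and, for distinct $u,v\in V(G)$, $uv\in E(G)$ iff $\Phi(u)\cap\Phi(v)\neq\emptyset$. It is nice if every vertex of $H^{\Phi}$ lies in some $\Phi(v)$ and for every edge $xy$ of $H^{\Phi}$ some $\Phi(v)$ contains both $x$ and $y$. A tree decomposition of a graph $F$ is a pair $(T,\mathcal{X})$ with $T$ a tree and $\mathcal{X}:V(T)\to 2^{V(F)}$ such that every vertex of $F$ lies in some bag, every edge of $F$ has both ends in some bag, and for each vertex $v$ of $F$ the set $\{t: v\in\mathcal{X}(t)\}$ induces a nonempty connected subtree of $T$. An $H$-profile of $G$ is a tuple $((H^{\Phi},\Phi);(T,\mathcal{X}))$ where $(H^{\Phi},\Phi)$ is a nice $H$-representation of $G$ and $(T,\mathcal{X})$ is a tree decomposition of $H^{\Phi}$. For $x\in V(H^{\Phi})$, $V_x=\{v\in V(G): x\in\Phi(v)\}$. A longest path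 of $G$ is a path of maximum length in $G$; a longest path transversal is a set of vertices of $G$ meeting every longest path. *)

theory Defs
  imports Main
begin

definition graph :: "'a set \<Rightarrow> 'a set set \<Rightarrow> bool" where
  "graph V E \<longleftrightarrow> finite V \<and> (\<forall>e\<in>E. \<exists>x y. x \<noteq> y \<and> e = {x, y} \<and> x \<in> V \<and> y \<in> V)"

definition list_edges :: "'a list \<Rightarrow> 'a set set" where
  "list_edges p = {{p ! i, p ! Suc i} | i. Suc i < length p}"

text \<open>A path is a nonempty list of distinct vertices, consecutive ones adjacent;
its length is the number of edges, i.e. length p - 1.\<close>
definition is_path :: "'a set \<Rightarrow> 'a set set \<Rightarrow> 'a list \<Rightarrow> bool" where
  "is_path V E p \<longleftrightarrow> p \<noteq> [] \<and> distinct p \<and> set p \<subseteq> V \<and> list_edges p \<subseteq> E"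

definition connected_set :: "'a set \<Rightarrow> 'a set set \<Rightarrow> 'a set \<Rightarrow> bool" where
  "connected_set V E S \<longleftrightarrow> S \<noteq> {} \<and> S \<subseteq> V \<and>
     (\<forall>x\<in>S. \<forall>y\<in>S. \<exists>p. is_path S {e\<in>E. e \<subseteq> S} p \<and> hd p = x \<and> last p = y)"

definition connected_graph :: "'a set \<Rightarrow> 'a set set \<Rightarrow> bool" where
  "connected_graph V E \<longleftrightarrow> graph V E \<and> connected_set V E V"

definition has_cycle :: "'a set \<Rightarrow> 'a set set \<Rightarrow> bool" where
  "has_cycle V E \<longleftrightarrow> (\<exists>c. length c \<ge> 3 \<and> is_path V E c \<and> {last c, hd c} \<in> E)"

definition tree :: "'a set \<Rightarrow> 'a set set \<Rightarrow> bool" where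
  "tree V E \<longleftrightarrow> connected_graph V E \<and> \<not> has_cycle V E"

text \<open>F = (VF, EF) is a subdivision of H = (VH, EH): the vertices of H are embedded
by an injective map emb, each edge e of H is replaced by a path P e between the images
of its ends, of length at least one, the interiors are pairwise disjoint and disjoint
from the branch vertices, and F consists exactly of the branch vertices, the interior
vertices and the path edges (so the interiors are also pairwise anticomplete).\<close>
definition interior :: "'a list \<Rightarrow> 'a set" where
  "interior p = set (butlast (tl p))"

definition subdivision :: "'h set \<Rightarrow> 'h set set \<Rightarrow> 'f set \<Rightarrow> 'f set set \<Rightarrow> bool" where
  "subdivision VH EH VF EF \<longleftrightarrow>
     (\<exists>emb :: 'h \<Rightarrow> 'f. \<exists>P :: 'h set \<Rightarrow> 'f list.
        inj_on emb VH \<and>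
        (\<forall>e\<in>EH. length (P e) \<ge> 2 \<and> distinct (P e) \<and> {hd (P e), last (P e)} = emb ` e
                 \<and> interior (P e) \<inter> emb ` VH = {}) \<and>
        (\<forall>e\<in>EH. \<forall>e'\<in>EH. e \<noteq> e' \<longrightarrow> interior (P e) \<inter> interior (P e') = {}) \<and>
        VF = emb ` VH \<union> (\<Union>e\<in>EH. interior (P e)) \<and>
        EF = (\<Union>e\<in>EH. list_edges (P e)))"

definition representation ::
  "'h set \<Rightarrow> 'h set set \<Rightarrow> 'v set \<Rightarrow> 'v set set \<Rightarrow> 'f set \<Rightarrow> 'f set set \<Rightarrow> ('v \<Rightarrow> 'f set) \<Rightarrow> bool" where
  "representation VH EH VG EG VF EF Phi \<longleftrightarrow>
     subdivision VH EH VF EF \<and>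
     (\<forall>v\<in>VG. Phi v \<subseteq> VF \<and> connected_set VF EF (Phi v)) \<and>
     (\<forall>u\<in>VG. \<forall>v\<in>VG. u \<noteq> v \<longrightarrow> ({u, v} \<in> EG \<longleftrightarrow> Phi u \<inter> Phi v \<noteq> {}))"

definition nice_representation ::
  "'h set \<Rightarrow> 'h set set \<Rightarrow> 'v set \<Rightarrow> 'v set set \<Rightarrow> 'f set \<Rightarrow> 'f set set \<Rightarrow> ('v \<Rightarrow> 'f set) \<Rightarrow> bool" where
  "nice_representation VH EH VG EG VF EF Phi \<longleftrightarrow>
     representation VH EH VG EG VF EF Phi \<and>
     (\<forall>x\<in>VF. \<exists>v\<in>VG. x \<in> Phi v) \<and>
     (\<forall>e\<in>EF. \<exists>v\<in>VG. e \<subseteq> Phi v)"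

definition tree_decomposition ::
  "'f set \<Rightarrow> 'f set set \<Rightarrow> 't set \<Rightarrow> 't set set \<Rightarrow> ('t \<Rightarrow> 'f set) \<Rightarrow> bool" where
  "tree_decomposition VF EF VT ET X \<longleftrightarrow>
     tree VT ET \<and>
     (\<forall>t\<in>VT. X t \<subseteq> VF) \<and>
     (\<forall>x\<in>VF. \<exists>t\<in>VT. x \<in> X t) \<and>
     (\<forall>e\<in>EF. \<exists>t\<in>VT. e \<subseteq> X t) \<and>
     (\<forall>x\<in>VF. connected_set VT ET {t\<in>VT. x \<in> X t})"

definition profile ::
  "'h set \<Rightarrow> 'h set set \<Rightarrow> 'v set \<Rightarrow> 'v set set \<Rightarrow> 'f set \<Rightarrow> 'f set set \<Rightarrow> ('v \<Rightarrow> 'f set)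
   \<Rightarrow> 't set \<Rightarrow> 't set set \<Rightarrow> ('t \<Rightarrow> 'f set) \<Rightarrow> bool" where
  "profile VH EH VG EG VF EF Phi VT ET X \<longleftrightarrow>
     nice_representation VH EH VG EG VF EF Phi \<and> tree_decomposition VF EF VT ET X"

definition Vx :: "'v set \<Rightarrow> ('v \<Rightarrow> 'f set) \<Rightarrow> 'f \<Rightarrow> 'v set" where
  "Vx VG Phi x = {v\<in>VG. x \<in> Phi v}"

definition longest_path :: "'a set \<Rightarrow> 'a set set \<Rightarrow> 'a list \<Rightarrow> bool" where
  "longest_path V E p \<longleftrightarrow> is_path V E p \<and> (\<forall>q. is_path V E q \<longrightarrow> length q \<le> length p)"

definition lp_transversal :: "'a set \<Rightarrow> 'a set set \<Rightarrow> 'a set \<Rightarrow> bool" where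
  "lp_transversal V E S \<longleftrightarrow> S \<subseteq> V \<and> (\<forall>p. longest_path V E p \<longrightarrow> set p \<inter> S \<noteq> {})"

end

theory Submission imports Defs begin

lemma le_Nil[simp]: "list_edges [] = {}"
  by (simp add: list_edges_def)
lemma le_single[simp]: "list_edges [a] = {}"
  by (simp add: list_edges_def)
lemma le_Cons2[simp]: "list_edges (a#b#xs) = insert {a,b} (list_edges (b#xs))"
proof (rule set_eqI)
  fix e
  show "e \<in> list_edges (a#b#xs) \<longleftrightarrow> e \<in> insert {a,b} (list_edges (b#xs))"
  proof
    assume "e \<in> list_edges (a#b#xs)"
    then obtain i where i: "e = {(a#b#xs)!i, (a#b#xs)!Suc i}" "Suc i < length (a#b#xs)"
      unfolding list_edges_def by blast
    show "e \<in> insert {a,b} (list_edges (b#xs))"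
    proof (cases i)
      case 0 then show ?thesis using i by simp
    next
      case (Suc j) then show ?thesis using i unfolding list_edges_def by auto
    qed
  next
    assume "e \<in> insert {a,b} (list_edges (b#xs))"
    then show "e \<in> list_edges (a#b#xs)"
    proof
      assume "e = {a,b}" then show ?thesis unfolding list_edges_def
        by (auto intro!: exI[of _ 0])
    next
      assume "e \<in> list_edges (b#xs)"
      then obtain i where i: "e = {(b#xs)!i, (b#xs)!Suc i}" "Suc i < length (b#xs)"
        unfolding list_edges_def by blast
      then show ?thesis unfolding list_edges_def
        by (auto intro!: exI[of _ "Suc i"])
    qed
  qed
qed

lemma le_append:
  "xs \<noteq> [] \<Longrightarrow> ys \<noteq> [] \<Longrightarrow>
   list_edges (xs @ ys) = list_edges xs \<union> list_edges ys \<union> {{last xs, hd ys}}"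
proof (induction xs rule: induct_list012)
  case 1 then show ?case by simp
next
  case (2 a) then show ?case by (cases ys) auto
next
  case (3 a b zs) then show ?case by auto
qed

lemma le_rev[simp]: "list_edges (rev xs) = list_edges xs"
proof (induction xs)
  case Nil then show ?case by simp
next
  case (Cons a xs)
  show ?case
  proof (cases xs)
    case Nil then show ?thesis by simp
  next
    case (Cons b ys)
    have "list_edges (rev (a#xs)) = list_edges (rev xs @ [a])" by simp
    also have "\<dots> = list_edges (rev xs) \<union> {{last (rev xs), a}}"
      using Cons by (subst le_append) auto
    also have "\<dots> = list_edges (a#xs)" using Cons.IH Cons by (auto simp: insert_commute)
    finally show ?thesis .
  qed
qed

lemma le_sub: "e \<in> list_edges p \<Longrightarrow> e \<subseteq> set p"
  unfolding list_edges_def by auto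

lemma is_path_append:
  "xs \<noteq> [] \<Longrightarrow> ys \<noteq> [] \<Longrightarrow> is_path V E (xs @ ys) \<longleftrightarrow>
    is_path V E xs \<and> is_path V E ys \<and> set xs \<inter> set ys = {} \<and> {last xs, hd ys} \<in> E"
  unfolding is_path_def by (auto simp: le_append)

lemma is_path_rev[simp]: "is_path V E (rev p) \<longleftrightarrow> is_path V E p"
  unfolding is_path_def by auto

lemma is_path_prefix: "is_path V E (xs @ ys) \<Longrightarrow> xs \<noteq> [] \<Longrightarrow> is_path V E xs"
  by (cases "ys = []") (auto simp: is_path_append)

lemma is_path_suffix: "is_path V E (xs @ ys) \<Longrightarrow> ys \<noteq> [] \<Longrightarrow> is_path V E ys"
  by (cases "xs = []") (auto simp: is_path_append)

lemma is_path_restrict: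
  "is_path V E r \<Longrightarrow> set r \<subseteq> W \<Longrightarrow> (\<forall>e\<in>E. e \<subseteq> set r \<longrightarrow> e \<in> E') \<Longrightarrow> is_path W E' r"
  unfolding is_path_def using le_sub by blast

lemma is_path_single[simp]: "is_path V E [x] \<longleftrightarrow> x \<in> V"
  unfolding is_path_def by auto

lemma glue:
  assumes "is_path V E xs" "is_path V E ys" "last xs = hd ys" "set xs \<inter> set ys \<subseteq> {hd ys}"
  shows "is_path V E (xs @ tl ys)" "length (xs @ tl ys) = length xs + length ys - 1"
proof -
  have ys: "ys \<noteq> []" "xs \<noteq> []" using assms unfolding is_path_def by auto
  show "length (xs @ tl ys) = length xs + length ys - 1" using ys by (cases ys) auto
  show "is_path V E (xs @ tl ys)"
  proof (cases "tl ys = []")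
    case True then show ?thesis using assms by simp
  next
    case False
    obtain h ys' where h: "ys = h # ys'" using ys by (cases ys) auto
    have "ys = [h] @ ys'" using h by simp
    then have p: "is_path V E ys'" "{h, hd ys'} \<in> E" "h \<notin> set ys'"
      using assms(2) False h is_path_append[of "[h]" ys' V E] by auto
    show ?thesis using False h p assms ys by (auto simp: is_path_append)
  qed
qed

definition adjR :: "'a set set \<Rightarrow> 'a set \<Rightarrow> ('a \<times> 'a) set" where
  "adjR E S = {(a,b). a \<in> S \<and> b \<in> S \<and> {a,b} \<in> E}"

lemma adjR_mono: "S \<subseteq> S' \<Longrightarrow> (adjR E S)\<^sup>* \<subseteq> (adjR E S')\<^sup>*"
  by (rule rtrancl_mono) (auto simp: adjR_def)

lemma adjR_sym: "(a,b) \<in> (adjR E S)\<^sup>* \<Longrightarrow> (b,a) \<in> (adjR E S)\<^sup>*"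
proof -
  assume "(a,b) \<in> (adjR E S)\<^sup>*"
  then have "(b,a) \<in> ((adjR E S)\<inverse>)\<^sup>*" by (simp add: rtrancl_converse)
  moreover have "(adjR E S)\<inverse> = adjR E S" by (auto simp: adjR_def insert_commute)
  ultimately show ?thesis by simp
qed

lemma path_walk:
  "list_edges p \<subseteq> E \<Longrightarrow> set p \<subseteq> S \<Longrightarrow> a \<in> set p \<Longrightarrow> b \<in> set p \<Longrightarrow> (a,b) \<in> (adjR E S)\<^sup>*"
proof (induction p arbitrary: a b rule: induct_list012)
  case 1 then show ?case by simp
next
  case (2 x) then show ?case by simp
next
  case (3 x y zs)
  have e: "(x,y) \<in> (adjR E S)\<^sup>*" using 3(3,4) by (auto simp: adjR_def)
  have e': "(y,x) \<in> (adjR E S)\<^sup>*" using adjR_sym[OF e] .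
  have ih: "\<And>a b. a \<in> set (y#zs) \<Longrightarrow> b \<in> set (y#zs) \<Longrightarrow> (a,b) \<in> (adjR E S)\<^sup>*"
    using 3 by auto
  show ?case
  proof (cases "a = x")
    case True
    show ?thesis
    proof (cases "b = x")
      case True then show ?thesis using \<open>a = x\<close> by simp
    next
      case False then show ?thesis using \<open>a = x\<close> 3(6) e ih[of y b]
        by (meson list.set_intros(1) rtrancl_trans set_ConsD)
    qed
  next
    case False
    then have a: "a \<in> set (y#zs)" using 3(5) by auto
    show ?thesis
    proof (cases "b = x")
      case True then show ?thesis using a e' ih[of a y] by (meson list.set_intros(1) rtrancl_trans)
    next
      case False then show ?thesis using a 3(6) ih by auto
    qed
  qed
qed

lemma walk_path:
  assumes "(x,y) \<in> (adjR E S)\<^sup>*" "x \<in> S"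
  shows "\<exists>p. is_path S {e\<in>E. e \<subseteq> S} p \<and> hd p = x \<and> last p = y"
  using assms
proof (induction rule: rtrancl_induct)
  case base
  then show ?case by (intro exI[of _ "[x]"]) simp
next
  case (step y z)
  obtain p where p: "is_path S {e\<in>E. e \<subseteq> S} p" "hd p = x" "last p = y"
    using step.IH step.prems by blast
  have z: "z \<in> S" "{y,z} \<in> E" "y \<in> S" using step(2) by (auto simp: adjR_def)
  have pne: "p \<noteq> []" using p unfolding is_path_def by auto
  show ?case
  proof (cases "z \<in> set p")
    case True
    then obtain us vs where uv: "p = us @ z # vs" by (meson split_list)
    then have "p = (us @ [z]) @ vs" by simp
    then have "is_path S {e\<in>E. e \<subseteq> S} (us @ [z])" using p(1) is_path_prefix[of S _ "us @ [z]" vs] by simp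
    moreover have "hd (us @ [z]) = x" using p(2) uv by (cases us) auto
    ultimately show ?thesis by (intro exI[of _ "us @ [z]"]) simp
  next
    case False
    have "is_path S {e\<in>E. e \<subseteq> S} (p @ [z])"
      using p pne z False is_path_append[of p "[z]" S "{e\<in>E. e \<subseteq> S}"] by simp
    moreover have "hd (p @ [z]) = x" using p(2) pne by simp
    ultimately show ?thesis by (intro exI[of _ "p @ [z]"]) simp
  qed
qed

lemma conn_iff:
  "connected_set V E S \<longleftrightarrow> S \<noteq> {} \<and> S \<subseteq> V \<and> (\<forall>x\<in>S. \<forall>y\<in>S. (x,y) \<in> (adjR E S)\<^sup>*)"
proof
  assume c: "connected_set V E S"
  show "S \<noteq> {} \<and> S \<subseteq> V \<and> (\<forall>x\<in>S. \<forall>y\<in>S. (x,y) \<in> (adjR E S)\<^sup>*)"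
  proof (intro conjI ballI)
    fix x y assume "x \<in> S" "y \<in> S"
    then obtain p where p: "is_path S {e\<in>E. e \<subseteq> S} p" "hd p = x" "last p = y"
      using c unfolding connected_set_def by blast
    have "p \<noteq> []" using p unfolding is_path_def by auto
    moreover have "list_edges p \<subseteq> E" "set p \<subseteq> S" using p(1) unfolding is_path_def by auto
    ultimately show "(x,y) \<in> (adjR E S)\<^sup>*" using p path_walk[of p E S x y] by auto
  qed (use c in \<open>auto simp: connected_set_def\<close>)
next
  assume "S \<noteq> {} \<and> S \<subseteq> V \<and> (\<forall>x\<in>S. \<forall>y\<in>S. (x,y) \<in> (adjR E S)\<^sup>*)"
  then have h: "S \<noteq> {}" "S \<subseteq> V" "\<And>x y. x\<in>S \<Longrightarrow> y\<in>S \<Longrightarrow> (x,y) \<in> (adjR E S)\<^sup>*" by auto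
  show "connected_set V E S" unfolding connected_set_def
  proof (intro conjI ballI h(1,2))
    fix x y assume "x \<in> S" "y \<in> S"
    then show "\<exists>p. is_path S {e\<in>E. e \<subseteq> S} p \<and> hd p = x \<and> last p = y"
      using walk_path[OF h(3)] by blast
  qed
qed

lemma union_walk:
  assumes "(u,v) \<in> (adjR E1 I)\<^sup>*" "u \<in> I"
    and conn: "\<forall>i\<in>I. \<forall>a\<in>f i. \<forall>b\<in>f i. (a,b) \<in> (adjR E2 (f i))\<^sup>*"
    and meet: "\<forall>i\<in>I. \<forall>j\<in>I. {i,j} \<in> E1 \<longrightarrow> f i \<inter> f j \<noteq> {}"
    and "a \<in> f u" "b \<in> f v"
  shows "(a,b) \<in> (adjR E2 (\<Union>(f ` I)))\<^sup>*"
  using assms(1,6)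
proof (induction arbitrary: b rule: rtrancl_induct)
  case base
  have sub: "f u \<subseteq> \<Union>(f ` I)" using assms(2) by blast
  have "(a,b) \<in> (adjR E2 (f u))\<^sup>*" using conn assms(2,5) base by blast
  then show ?case by (rule subsetD[OF adjR_mono[OF sub]])
next
  case (step y z)
  have yz: "y \<in> I" "z \<in> I" "{y,z} \<in> E1" using step(2) by (auto simp: adjR_def)
  then obtain c where c: "c \<in> f y" "c \<in> f z" using meet by blast
  have 1: "(a,c) \<in> (adjR E2 (\<Union>(f ` I)))\<^sup>*" using step.IH[OF c(1)] .
  have sub: "f z \<subseteq> \<Union>(f ` I)" using yz by blast
  have "(c,b) \<in> (adjR E2 (f z))\<^sup>*" using conn yz c step(4) by blast
  then have "(c,b) \<in> (adjR E2 (\<Union>(f ` I)))\<^sup>*" by (rule subsetD[OF adjR_mono[OF sub]])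
  then show ?case by (rule rtrancl_trans[OF 1])
qed

lemma half_side:
  assumes "is_path V E P" "p \<in> set P"
  shows "\<exists>A. is_path V E A \<and> last A = p \<and> set A \<subseteq> set P \<and> length P + 1 \<le> 2 * length A"
proof -
  obtain P1 P2 where P: "P = P1 @ p # P2" using assms(2) by (meson split_list)
  have "P = (P1 @ [p]) @ P2" using P by simp
  then have a1: "is_path V E (P1 @ [p])" using assms(1) is_path_prefix[of V E "P1 @ [p]" P2] by simp
  have a2': "is_path V E (p # P2)" using assms(1) P is_path_suffix[of V E P1 "p # P2"] by simp
  have a2: "is_path V E (rev (p # P2))" using is_path_rev[of V E "p # P2"] a2' by blast
  show ?thesis
  proof (cases "length P2 \<le> length P1")
    case True then show ?thesis using a1 P by (intro exI[of _ "P1 @ [p]"]) auto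
  next
    case False then show ?thesis using a2 P by (intro exI[of _ "rev (p # P2)"]) auto
  qed
qed

lemma path_ne: "is_path V E p \<Longrightarrow> p \<noteq> []"
  unfolding is_path_def by auto

lemma longest_meet:
  assumes G: "connected_graph V E" and LP: "longest_path V E P" and LQ: "longest_path V E Q"
  shows "set P \<inter> set Q \<noteq> {}"
proof
  assume disj: "set P \<inter> set Q = {}"
  have pP: "is_path V E P" and pQ: "is_path V E Q" using LP LQ unfolding longest_path_def by auto
  have lenPQ: "length P = length Q" using LP LQ unfolding longest_path_def by (meson le_antisym)
  define C where "C = {r. is_path V E r \<and> hd r \<in> set P \<and> last r \<in> set Q}"
  have PV: "hd P \<in> V" "hd Q \<in> V" using pP pQ path_ne[OF pP] path_ne[OF pQ]
    unfolding is_path_def by auto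
  obtain r0 where r0: "is_path V {e\<in>E. e \<subseteq> V} r0" "hd r0 = hd P" "last r0 = hd Q"
    using G PV unfolding connected_graph_def connected_set_def by blast
  have "is_path V E r0" using r0(1) unfolding is_path_def by auto
  then have "r0 \<in> C" unfolding C_def using r0 path_ne[OF pP] path_ne[OF pQ] by auto
  then obtain R where RC: "R \<in> C" and Rmin: "\<And>r. r \<in> C \<Longrightarrow> length R \<le> length r"
    using ex_has_least_nat[of "\<lambda>r. r \<in> C" r0 length] by blast
  have pR: "is_path V E R" "hd R \<in> set P" "last R \<in> set Q" using RC unfolding C_def by auto
  have Rne: "R \<noteq> []" using path_ne[OF pR(1)] .
  have hl: "hd R \<noteq> last R" using pR disj by auto
  have tlne: "tl R \<noteq> []" using hl Rne by (cases R) auto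
  have tlP: "set (tl R) \<inter> set P = {}"
  proof (rule ccontr)
    assume "set (tl R) \<inter> set P \<noteq> {}"
    then obtain z where z: "z \<in> set (tl R)" "z \<in> set P" by blast
    then obtain us vs where uv: "tl R = us @ z # vs" by (meson split_list)
    have R2: "R = (hd R # us) @ (z # vs)" using uv Rne by (cases R) auto
    then have "is_path V E (z # vs)" using pR(1) is_path_suffix[of V E "hd R # us" "z # vs"] by simp
    moreover have "last (z # vs) = last R" using R2 by (metis last_appendR list.distinct(1))
    ultimately have "z # vs \<in> C" using z pR unfolding C_def by auto
    then have "length R \<le> length (z # vs)" by (rule Rmin)
    then show False using arg_cong[OF R2, of length] by simp
  qed
  have blQ: "set (butlast R) \<inter> set Q = {}"
  proof (rule ccontr)
    assume "set (butlast R) \<inter> set Q \<noteq> {}"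
    then obtain z where z: "z \<in> set (butlast R)" "z \<in> set Q" by blast
    then obtain us vs where uv: "butlast R = us @ z # vs" by (meson split_list)
    have R2: "R = (us @ [z]) @ (vs @ [last R])" using uv Rne
      by (metis append.assoc append_Cons append_butlast_last_id append_self_conv2)
    then have "is_path V E (us @ [z])" using pR(1) is_path_prefix[of V E "us @ [z]" "vs @ [last R]"] by simp
    moreover have "hd (us @ [z]) = hd R" using arg_cong[OF R2, of hd] by (cases us) auto
    ultimately have "us @ [z] \<in> C" using z pR unfolding C_def by auto
    then have "length R \<le> length (us @ [z])" by (rule Rmin)
    then show False using arg_cong[OF R2, of length] by simp
  qed
  have setR1: "set R = insert (hd R) (set (tl R))" using Rne by (cases R) auto
  have setR2: "set R = insert (last R) (set (butlast R))" using Rne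
    by (metis append_butlast_last_id list.simps(15) rotate1.simps(2) set_rotate1)
  obtain A where A: "is_path V E A" "last A = hd R" "set A \<subseteq> set P" "length P + 1 \<le> 2 * length A"
    using half_side[OF pP pR(2)] by blast
  have pQr: "is_path V E (rev Q)" using pQ by simp
  obtain B' where B': "is_path V E B'" "last B' = last R" "set B' \<subseteq> set (rev Q)" "length (rev Q) + 1 \<le> 2 * length B'"
    using half_side[OF pQr] pR(3) by (metis set_rev)
  define B where "B = rev B'"
  have B: "is_path V E B" "hd B = last R" "set B \<subseteq> set Q" "length Q + 1 \<le> 2 * length B"
    using B' path_ne[OF B'(1)] unfolding B_def by (auto simp: hd_rev)
  have i1: "set A \<inter> set R \<subseteq> {hd R}" using A(3) tlP setR1 by auto
  note g1 = glue[OF A(1) pR(1) A(2) i1]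
  have last1: "last (A @ tl R) = last R" using tlne Rne by (simp add: last_tl)
  have i2: "set (A @ tl R) \<inter> set B \<subseteq> {hd B}"
  proof -
    have "set A \<inter> set B = {}" using A(3) B(3) disj by auto
    moreover have "set (tl R) \<inter> set B \<subseteq> {last R}"
      using B(3) blQ setR2 setR1 Rne by (auto simp: list.set_sel(2))
    ultimately show ?thesis using B(2) by auto
  qed
  note g2 = glue[OF g1(1) B(1) _ i2]
  have "is_path V E ((A @ tl R) @ tl B)" using g2(1) last1 B(2) by simp
  moreover have "length ((A @ tl R) @ tl B) = length A + length R - 1 + length B - 1"
    using g2(2) last1 B(2) g1(2) by simp
  moreover have "length R \<ge> 2" using tlne Rne by (cases R) (auto simp: Suc_le_eq)
  ultimately have "length P < length ((A @ tl R) @ tl B)"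
    using A(4) B(4) lenPQ by linarith
  moreover have "length ((A @ tl R) @ tl B) \<le> length P" using LP \<open>is_path V E ((A @ tl R) @ tl B)\<close>
    unfolding longest_path_def by blast
  ultimately show False by simp
qed

lemma graph_edge: "graph V E \<Longrightarrow> {a,b} \<in> E \<Longrightarrow> a \<noteq> b \<and> a \<in> V \<and> b \<in> V"
  unfolding graph_def by (auto simp: doubleton_eq_iff)

lemma avoid:
  assumes "is_path V E q" "hd q \<noteq> l" "last q \<noteq> l" "\<forall>a b. {l,a}\<in>E \<longrightarrow> {l,b}\<in>E \<longrightarrow> a = b"
  shows "l \<notin> set q"
proof
  assume "l \<in> set q"
  then obtain us vs where q: "q = us @ l # vs" by (meson split_list)
  have us: "us \<noteq> []" using q assms(2) by auto
  have vs: "vs \<noteq> []" using q assms(3) by auto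
  have 1: "{last us, l} \<in> E" "is_path V E (l # vs)" "set us \<inter> set (l # vs) = {}"
    using assms(1) q us is_path_append[of us "l # vs" V E] by auto
  have "l # vs = [l] @ vs" by simp
  then have 2: "{l, hd vs} \<in> E" "l \<notin> set vs"
    using 1(2) vs is_path_append[of "[l]" vs V E] by auto
  have "distinct q" using assms(1) unfolding is_path_def by auto
  have "last us \<noteq> hd vs" using 1(3) last_in_set[OF us] hd_in_set[OF vs] by auto
  moreover have "{l, last us} \<in> E" using 1(1) by (simp add: insert_commute)
  then have "last us = hd vs" using assms(4) 2(1) by blast
  ultimately show False by simp
qed

lemma path_len_card: "finite V \<Longrightarrow> is_path V E q \<Longrightarrow> length q \<le> card V"
  unfolding is_path_def by (metis card_mono distinct_card)

lemma leaf_exists: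
  assumes T: "tree V E" and c2: "2 \<le> card V"
  shows "\<exists>l\<in>V. \<exists>p\<in>V. l \<noteq> p \<and> {l,p} \<in> E \<and> (\<forall>y. {l,y} \<in> E \<longrightarrow> y = p)"
proof -
  have g: "graph V E" and cs: "connected_set V E V" and nc: "\<not> has_cycle V E"
    using T unfolding tree_def connected_graph_def by auto
  have fin: "finite V" using g unfolding graph_def by auto
  obtain a b where ab: "a \<in> V" "b \<in> V" "a \<noteq> b"
  proof -
    obtain a where a: "a \<in> V" using c2 by fastforce
    have "card (V - {a}) \<ge> 1" using c2 a fin by simp
    then have "V - {a} \<noteq> {}" by (metis card.empty not_one_le_zero)
    then obtain b where "b \<in> V - {a}" by blast
    then show ?thesis using that a by blast
  qed
  obtain r where r: "is_path V {e\<in>E. e \<subseteq> V} r" "hd r = a" "last r = b"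
    using cs ab unfolding connected_set_def by blast
  have rp: "is_path V E r" using r(1) unfolding is_path_def by auto
  have "length r \<noteq> 1"
  proof
    assume "length r = 1"
    then obtain x where "r = [x]" by (cases r) auto
    then show False using r ab by simp
  qed
  then have r2: "2 \<le> length r" using path_ne[OF rp] by (cases r) (auto simp: Suc_le_eq)
  have ex: "\<exists>q. is_path V E q \<and> length q = length r" using rp by blast
  have bd: "\<forall>m. (\<exists>q. is_path V E q \<and> length q = m) \<longrightarrow> (\<lambda>x. x) m < Suc (card V)"
    using path_len_card[OF fin] by (auto simp: less_Suc_eq_le)
  obtain n where n: "\<exists>q. is_path V E q \<and> length q = n" "\<forall>m. (\<exists>q. is_path V E q \<and> length q = m) \<longrightarrow> m \<le> n"
    using ex_has_greatest_nat[where P="\<lambda>n. \<exists>q. is_path V E q \<and> length q = n", OF ex bd] by blast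
  then obtain q where q: "is_path V E q" "length q = n" by blast
  have qmax: "\<And>q'. is_path V E q' \<Longrightarrow> length q' \<le> length q" using n(2) q(2) by blast
  have "length q \<ge> 2" using qmax[OF rp] r2 by simp
  then obtain l p rest where qq: "q = l # p # rest" by (cases q; cases "tl q") auto
  have "q = [l] @ (p # rest)" using qq by simp
  then have lp: "{l,p} \<in> E" "l \<noteq> p" using q(1) is_path_append[of "[l]" "p # rest" V E] by auto
  have lV: "l \<in> V" "p \<in> V" using graph_edge[OF g lp(1)] by auto
  have nb: "y = p" if y: "{l,y} \<in> E" for y
  proof (rule ccontr)
    assume ynp: "y \<noteq> p"
    have yl: "y \<noteq> l" "y \<in> V" using graph_edge[OF g y] by auto
    show False
    proof (cases "y \<in> set q")
      case False
      have "is_path V E ([y] @ q)"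
        using q(1) qq False yl y is_path_append[of "[y]" q V E] by (auto simp: insert_commute)
      from qmax[OF this] show False by simp
    next
      case True
      then have "y \<in> set rest" using qq yl ynp by auto
      then obtain us vs where rs: "rest = us @ y # vs" by (meson split_list)
      define c where "c = l # p # us @ [y]"
      have "q = c @ vs" using qq rs c_def by simp
      then have cp: "is_path V E c" using q(1) is_path_prefix[of V E c vs] c_def by simp
      have "length c \<ge> 3" unfolding c_def by simp
      moreover have "{last c, hd c} \<in> E" using y c_def by (simp add: insert_commute)
      ultimately show False using nc cp unfolding has_cycle_def by blast
    qed
  qed
  show ?thesis using lV lp nb by blast
qed

lemma path_edges_sub: "is_path V E r \<Longrightarrow> e \<in> list_edges r \<Longrightarrow> e \<in> E \<and> e \<subseteq> set r"
  unfolding is_path_def using le_sub by blast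

lemma helly:
  assumes "tree V E" "\<forall>S\<in>F. connected_set V E S" "\<forall>S\<in>F. \<forall>S'\<in>F. S \<inter> S' \<noteq> {}"
  shows "\<exists>t\<in>V. \<forall>S\<in>F. t \<in> S"
  using assms
proof (induction "card V" arbitrary: V E F rule: less_induct)
  case less
  have g: "graph V E" and cs: "connected_set V E V" and nc: "\<not> has_cycle V E"
    using less.prems(1) unfolding tree_def connected_graph_def by auto
  have fin: "finite V" using g unfolding graph_def by auto
  have Vne: "V \<noteq> {}" using cs unfolding connected_set_def by auto
  show ?case
  proof (cases "card V < 2")
    case True
    then have "card V = 1" using Vne fin by (simp add: card_gt_0_iff less_2_cases_iff)
    then obtain t where t: "V = {t}" using card_1_singletonE by blast
    have "\<forall>S\<in>F. t \<in> S"
    proof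
      fix S assume "S \<in> F"
      then have "S \<noteq> {}" "S \<subseteq> V" using less.prems(2) unfolding connected_set_def by auto
      then show "t \<in> S" using t by auto
    qed
    then show ?thesis using t by auto
  next
    case False
    then have c2: "2 \<le> card V" by simp
    obtain l p where lp: "l \<in> V" "p \<in> V" "l \<noteq> p" "{l,p} \<in> E" and nb: "\<And>y. {l,y} \<in> E \<Longrightarrow> y = p"
      using leaf_exists[OF less.prems(1) c2] by blast
    have nb2: "\<forall>a b. {l,a}\<in>E \<longrightarrow> {l,b}\<in>E \<longrightarrow> a = b" using nb by metis
    define V' where "V' = V - {l}"
    define E' where "E' = {e\<in>E. l \<notin> e}"
    have pV': "p \<in> V'" using lp unfolding V'_def by auto
    have card': "card V' < card V" unfolding V'_def using fin lp(1) c2 by simp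
    have transfer: "is_path W' {e\<in>E'. e \<subseteq> W'} r"
      if r: "is_path W {e\<in>E. e \<subseteq> W} r" and nl: "l \<notin> set r" and sub: "set r \<subseteq> W'" for W W' r
    proof (rule is_path_restrict[OF r sub])
      show "\<forall>e\<in>{e \<in> E. e \<subseteq> W}. e \<subseteq> set r \<longrightarrow> e \<in> {e \<in> E'. e \<subseteq> W'}"
        unfolding E'_def using nl sub by blast
    qed
    have avoidW: "l \<notin> set r" if r: "is_path W {e\<in>E. e \<subseteq> W} r" "hd r \<noteq> l" "last r \<noteq> l" for W r
      using avoid[OF r] nb2 by blast
    have tree': "tree V' E'"
    proof -
      have "graph V' E'"
        unfolding graph_def
      proof (intro conjI ballI)
        show "finite V'" using fin unfolding V'_def by simp
        fix e assume e: "e \<in> E'"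
        then obtain x y where xy: "x \<noteq> y" "e = {x,y}" "x \<in> V" "y \<in> V" using g unfolding E'_def graph_def by blast
        then have "x \<noteq> l" "y \<noteq> l" using e unfolding E'_def by auto
        then show "\<exists>x y. x \<noteq> y \<and> e = {x, y} \<and> x \<in> V' \<and> y \<in> V'" using xy unfolding V'_def by blast
      qed
      moreover have "connected_set V' E' V'"
        unfolding connected_set_def
      proof (intro conjI ballI)
        show "V' \<noteq> {}" using pV' by auto
        show "V' \<subseteq> V'" by simp
        fix x y assume xy: "x \<in> V'" "y \<in> V'"
        then obtain r where r: "is_path V {e\<in>E. e \<subseteq> V} r" "hd r = x" "last r = y"
          using cs unfolding connected_set_def V'_def by blast
        have "l \<notin> set r" using avoidW[OF r(1)] r xy unfolding V'_def by auto
        moreover have "set r \<subseteq> V'" using r(1) calculation unfolding is_path_def V'_def by auto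
        ultimately have "is_path V' {e\<in>E'. e \<subseteq> V'} r" using transfer[OF r(1)] by blast
        then show "\<exists>p. is_path V' {e\<in>E'. e \<subseteq> V'} p \<and> hd p = x \<and> last p = y" using r by blast
      qed
      moreover have "\<not> has_cycle V' E'"
      proof
        assume "has_cycle V' E'"
        then obtain c where "length c \<ge> 3" "is_path V' E' c" "{last c, hd c} \<in> E'"
          unfolding has_cycle_def by blast
        then have "length c \<ge> 3" "is_path V E c" "{last c, hd c} \<in> E"
          unfolding is_path_def V'_def E'_def by auto
        then show False using nc unfolding has_cycle_def by blast
      qed
      ultimately show ?thesis unfolding tree_def connected_graph_def by blast
    qed
    have keyp: "p \<in> S" if S: "connected_set V E S" "l \<in> S" "S \<noteq> {l}" for S
    proof -
      obtain y where y: "y \<in> S" "y \<noteq> l" using S by blast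
      obtain r where r: "is_path S {e\<in>E. e \<subseteq> S} r" "hd r = l" "last r = y"
        using S(1) S(2) y(1) unfolding connected_set_def by blast
      have "r \<noteq> []" using path_ne[OF r(1)] .
      then obtain z rest where rr: "r = l # z # rest" using r y by (cases r; cases "tl r") auto
      have "r = [l] @ (z # rest)" using rr by simp
      then have "{l, z} \<in> E" "z \<in> S" using r(1) is_path_append[of "[l]" "z # rest" S "{e\<in>E. e \<subseteq> S}"]
        unfolding is_path_def by auto
      then show "p \<in> S" using nb by blast
    qed
    define gS where "gS S = (S - {l}) \<union> (if l \<in> S then {p} else {})" for S
    have gconn: "connected_set V' E' (gS S)" if S: "S \<in> F" for S
    proof -
      have Sc: "connected_set V E S" using S less.prems(2) by blast
      then have SV: "S \<subseteq> V" "S \<noteq> {}" unfolding connected_set_def by auto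
      show ?thesis
      proof (cases "l \<in> S \<and> S = {l}")
        case True
        then have "gS S = {p}" unfolding gS_def by auto
        moreover have "connected_set V' E' {p}" unfolding connected_set_def
        proof (intro conjI ballI)
          fix x y assume "x \<in> {p}" "y \<in> {p}"
          then show "\<exists>q. is_path {p} {e\<in>E'. e \<subseteq> {p}} q \<and> hd q = x \<and> last q = y"
            by (intro exI[of _ "[p]"]) simp
        qed (use pV' in auto)
        ultimately show ?thesis by simp
      next
        case False
        have gs: "gS S = S - {l}" using False keyp[OF Sc] unfolding gS_def using lp(3) by auto
        show ?thesis unfolding connected_set_def
        proof (intro conjI ballI)
          show "gS S \<noteq> {}" using gs SV False keyp[OF Sc] by auto
          show "gS S \<subseteq> V'" using gs SV unfolding V'_def by auto
          fix x y assume xy: "x \<in> gS S" "y \<in> gS S"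
          then obtain r where r: "is_path S {e\<in>E. e \<subseteq> S} r" "hd r = x" "last r = y"
            using Sc gs unfolding connected_set_def by blast
          have "l \<notin> set r" using avoidW[OF r(1)] r xy gs by auto
          moreover have "set r \<subseteq> gS S" using r(1) calculation gs unfolding is_path_def by auto
          ultimately have "is_path (gS S) {e\<in>E'. e \<subseteq> gS S} r" using transfer[OF r(1)] by blast
          then show "\<exists>p. is_path (gS S) {e\<in>E'. e \<subseteq> gS S} p \<and> hd p = x \<and> last p = y" using r by blast
        qed
      qed
    qed
    have gmeet: "\<forall>S\<in>gS ` F. \<forall>S'\<in>gS ` F. S \<inter> S' \<noteq> {}"
    proof (intro ballI)
      fix A B assume "A \<in> gS ` F" "B \<in> gS ` F"
      then obtain S S' where S: "S \<in> F" "S' \<in> F" "A = gS S" "B = gS S'" by blast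
      then obtain z where z: "z \<in> S" "z \<in> S'" using less.prems(3) by blast
      show "A \<inter> B \<noteq> {}"
      proof (cases "z = l")
        case True then have "p \<in> A" "p \<in> B" using S z unfolding gS_def by auto
        then show ?thesis by blast
      next
        case False then have "z \<in> A" "z \<in> B" using S z unfolding gS_def by auto
        then show ?thesis by blast
      qed
    qed
    obtain t' where t': "t' \<in> V'" "\<forall>S\<in>gS ` F. t' \<in> S"
      using less.hyps[OF card' tree' _ gmeet] gconn by blast
    show ?thesis
    proof (cases "t' = p")
      case False
      then have "\<forall>S\<in>F. t' \<in> S" using t' unfolding gS_def by (auto split: if_splits)
      then show ?thesis using t' unfolding V'_def by blast
    next
      case True
      show ?thesis
      proof (cases "\<exists>S0\<in>F. p \<notin> S0")
        case False then show ?thesis using lp by blast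
      next
        case True
        then obtain S0 where S0: "S0 \<in> F" "p \<notin> S0" by blast
        have "p \<in> gS S0" using t' S0 \<open>t' = p\<close> by blast
        then have "l \<in> S0" using S0 unfolding gS_def by (auto split: if_splits)
        then have "S0 = {l}" using keyp S0 less.prems(2) by blast
        then have "\<forall>S\<in>F. l \<in> S" using less.prems(3) S0(1) by blast
        then show ?thesis using lp by blast
      qed
    qed
  qed
qed

theorem lemma4p1:
  fixes VH :: "'h set" and EH :: "'h set set"
    and VG :: "'v set" and EG :: "'v set set"
    and VF :: "'f set" and EF :: "'f set set" and Phi :: "'v \<Rightarrow> 'f set"
    and VT :: "'t set" and ET :: "'t set set" and X :: "'t \<Rightarrow> 'f set"
  assumes "graph VH EH"
    and "connected_graph VG EG"
    and "profile VH EH VG EG VF EF Phi VT ET X"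
  shows "\<exists>t\<in>VT. lp_transversal VG EG (\<Union>x\<in>X t. Vx VG Phi x)"
proof -
  have nice: "nice_representation VH EH VG EG VF EF Phi" and td: "tree_decomposition VF EF VT ET X"
    using assms(3) unfolding profile_def by auto
  have rep: "representation VH EH VG EG VF EF Phi" using nice unfolding nice_representation_def by auto
  have PhiV: "\<forall>v\<in>VG. Phi v \<subseteq> VF \<and> connected_set VF EF (Phi v)"
    and Phimeet: "\<forall>u\<in>VG. \<forall>v\<in>VG. u \<noteq> v \<longrightarrow> ({u, v} \<in> EG \<longleftrightarrow> Phi u \<inter> Phi v \<noteq> {})"
    using rep unfolding representation_def by auto
  have T: "tree VT ET" "\<forall>t\<in>VT. X t \<subseteq> VF" "\<forall>x\<in>VF. \<exists>t\<in>VT. x \<in> X t" "\<forall>e\<in>EF. \<exists>t\<in>VT. e \<subseteq> X t"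
    "\<forall>x\<in>VF. connected_set VT ET {t\<in>VT. x \<in> X t}"
    using td unfolding tree_decomposition_def by auto
  have Phine: "Phi v \<noteq> {}" if "v \<in> VG" for v
    using PhiV that unfolding connected_set_def by blast
  define fT where "fT x = {t\<in>VT. x \<in> X t}" for x
  define SP where "SP P = (\<Union>x\<in>(\<Union>v\<in>set P. Phi v). fT x)" for P
  define L where "L = {P. longest_path VG EG P}"
  have SPconn: "connected_set VT ET (SP P)" if P: "P \<in> L" for P
  proof -
    have pP: "is_path VG EG P" using P unfolding L_def longest_path_def by auto
    have setP: "set P \<subseteq> VG" "list_edges P \<subseteq> EG" "P \<noteq> []" using pP unfolding is_path_def by auto
    define I where "I = (\<Union>v\<in>set P. Phi v)"
    have ne: "SP P \<noteq> {}"
    proof -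
      obtain v where v: "v \<in> set P" using setP(3) by (cases P) auto
      obtain x where x: "x \<in> Phi v" using Phine[of v] v setP(1) by blast
      then have "x \<in> VF" "x \<in> I" using PhiV v setP(1) unfolding I_def by blast+
      then obtain t where "t \<in> VT" "x \<in> X t" using T(3) by blast
      then show ?thesis unfolding SP_def fT_def using \<open>x \<in> I\<close> I_def by blast
    qed
    have sub: "SP P \<subseteq> VT" unfolding SP_def fT_def by blast
    have walk: "(t1,t2) \<in> (adjR ET (SP P))\<^sup>*" if t: "t1 \<in> SP P" "t2 \<in> SP P" for t1 t2
    proof -
      obtain x1 v1 where 1: "v1 \<in> set P" "x1 \<in> Phi v1" "t1 \<in> fT x1" using t(1) unfolding SP_def by blast
      obtain x2 v2 where 2: "v2 \<in> set P" "x2 \<in> Phi v2" "t2 \<in> fT x2" using t(2) unfolding SP_def by blast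
      have w1: "(v1,v2) \<in> (adjR EG (set P))\<^sup>*" using path_walk[OF setP(2) order_refl 1(1) 2(1)] .
      have connPhi: "\<forall>i\<in>set P. \<forall>a\<in>Phi i. \<forall>b\<in>Phi i. (a,b) \<in> (adjR EF (Phi i))\<^sup>*"
      proof (intro ballI)
        fix i a b assume i: "i \<in> set P" "a \<in> Phi i" "b \<in> Phi i"
        then have "connected_set VF EF (Phi i)" using PhiV setP(1) by blast
        then show "(a,b) \<in> (adjR EF (Phi i))\<^sup>*" using conn_iff[of VF EF "Phi i"] i by blast
      qed
      have meetPhi: "\<forall>i\<in>set P. \<forall>j\<in>set P. {i,j} \<in> EG \<longrightarrow> Phi i \<inter> Phi j \<noteq> {}"
      proof (intro ballI impI)
        fix i j assume ij: "i \<in> set P" "j \<in> set P" "{i,j} \<in> EG"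
        show "Phi i \<inter> Phi j \<noteq> {}"
        proof (cases "i = j")
          case True then show ?thesis using Phine ij setP(1) by auto
        next
          case False then show ?thesis using Phimeet ij setP(1) by blast
        qed
      qed
      have w2: "(x1,x2) \<in> (adjR EF I)\<^sup>*"
        using union_walk[OF w1 1(1) connPhi meetPhi 1(2) 2(2)] unfolding I_def by simp
      have x1I: "x1 \<in> I" using 1 unfolding I_def by blast
      have IVF: "I \<subseteq> VF" using PhiV setP unfolding I_def by blast
      have connT: "\<forall>i\<in>I. \<forall>a\<in>fT i. \<forall>b\<in>fT i. (a,b) \<in> (adjR ET (fT i))\<^sup>*"
      proof (intro ballI)
        fix i a b assume i: "i \<in> I" "a \<in> fT i" "b \<in> fT i"
        then have "connected_set VT ET (fT i)" using T(5) IVF unfolding fT_def by blast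
        then show "(a,b) \<in> (adjR ET (fT i))\<^sup>*" using conn_iff[of VT ET "fT i"] i by blast
      qed
      have meetT: "\<forall>i\<in>I. \<forall>j\<in>I. {i,j} \<in> EF \<longrightarrow> fT i \<inter> fT j \<noteq> {}"
      proof (intro ballI impI)
        fix i j assume ij: "i \<in> I" "j \<in> I" "{i,j} \<in> EF"
        then obtain t where "t \<in> VT" "{i,j} \<subseteq> X t" using T(4) by blast
        then have "t \<in> fT i" "t \<in> fT j" unfolding fT_def by auto
        then show "fT i \<inter> fT j \<noteq> {}" by blast
      qed
      have "(t1,t2) \<in> (adjR ET (\<Union>(fT ` I)))\<^sup>*"
        using union_walk[OF w2 x1I connT meetT 1(3) 2(3)] .
      then show ?thesis unfolding SP_def I_def by simp
    qed
    show ?thesis unfolding conn_iff using ne sub walk by blast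
  qed
  have SPmeet: "SP P \<inter> SP Q \<noteq> {}" if PQ: "P \<in> L" "Q \<in> L" for P Q
  proof -
    have "set P \<inter> set Q \<noteq> {}" using longest_meet[OF assms(2)] PQ unfolding L_def by blast
    then obtain v where v: "v \<in> set P" "v \<in> set Q" by blast
    have "v \<in> VG" using PQ v unfolding L_def longest_path_def is_path_def by auto
    then obtain x where x: "x \<in> Phi v" "x \<in> VF" using Phine PhiV by blast
    then obtain t where "t \<in> VT" "x \<in> X t" using T(3) by blast
    then have "t \<in> SP P" "t \<in> SP Q" unfolding SP_def fT_def using v x by blast+
    then show ?thesis by blast
  qed
  have h1: "\<forall>S\<in>SP ` L. connected_set VT ET S" using SPconn by blast
  have h2: "\<forall>S\<in>SP ` L. \<forall>S'\<in>SP ` L. S \<inter> S' \<noteq> {}" using SPmeet by blast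
  obtain t where t: "t \<in> VT" "\<forall>S\<in>SP ` L. t \<in> S" using helly[OF T(1) h1 h2] by blast
  show ?thesis
  proof (rule bexI[OF _ t(1)])
    show "lp_transversal VG EG (\<Union>x\<in>X t. Vx VG Phi x)" unfolding lp_transversal_def
    proof (intro conjI allI impI)
      show "(\<Union>x\<in>X t. Vx VG Phi x) \<subseteq> VG" unfolding Vx_def by blast
      fix P assume "longest_path VG EG P"
      then have P: "P \<in> L" "set P \<subseteq> VG" unfolding L_def longest_path_def is_path_def by auto
      then have "t \<in> SP P" using t by blast
      then obtain v x where "v \<in> set P" "x \<in> Phi v" "x \<in> X t" unfolding SP_def fT_def by blast
      then show "set P \<inter> (\<Union>x\<in>X t. Vx VG Phi x) \<noteq> {}" using P(2) unfolding Vx_def by blast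
    qed
  qed
qed

end
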